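(* Let $\varphi$ be a continuous Archimedean t-norm, let $m,n\ge 1$, $\mathscr{I}=\{1,\dots,m\}$, $\mathscr{J}=\{1,\dots,n\}$, let $A^{+}=(a^{+}_{ij}),A^{-}=(a^{-}_{ij})\in[0,1]^{m\times n}$ and $b=(b_i)\in[0,1]^m$. Let $S(A^{+},A^{-},b)$, $E$ and $S(e)$ ($e\in E$) be as defined in the context. Then $$S(A^{+},A^{-},b)=\bigcup_{e\in E}S(e).$$
   Context: A t-norm is a binary operation on $[0,1]$ that is commutative, associative, nondecreasing in each argument and has $1$ as neutral element; a continuous t-norm $\varphi$ is Archimedean if $\varphi(x,x)<x$ for all $x\in(0,1)$. Define $S(A^{+},A^{-},b)=\{x\in[0,1]^n:\ \max_{j\in\mathscr{J}}\max\{\varphi(a^{+}_{ij},x_j),\varphi(a^{-}_{ij},1-x_j)\}=b_i\ \forall i\in\mathscr{I}\}$. For $i\in\mathscr{I},j\in\mathscr{J}$: $S_{ij}=\{t\in[0,1]:\max\{\varphi(a^{+}_{ij},t),\varphi(a^{-}_{ij},1-t)\}=b_i\}$ and $I_{ij}=\{t\in[0,1]:\max\{\varphi(a^{+}_{ij},t),\varphi(a^{-}_{ij},1-t)\}\le b_i\}$. For $j\in\mathscr{J}$ let $I_j=\bigcap_{i\in\mathscr{I}}I_{ij}$, and let $S'_{ij}=S_{ij}\cap I_j$. For $i\in\mathscr{I}$ let $\mathscr{J}_i=\{j\in\mathscr{J}:S'_{ij}\neq\varnothing\}$. A function $e:\mathscr{I}\to\mathscr{J}$ is admissible if $e(i)\in\mathscr{J}_i(e)$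 for all $i\in\mathscr{I}$, where $\mathscr{J}_1(e)=\mathscr{J}_1$ and, for $i\ge 2$, with $\mathscr{I}_j(e,i)=\{k\in\mathscr{I}:1\le k<i,\ e(k)=j\}$, $\mathscr{J}_i(e)=\{j\in\mathscr{J}_i:\ \mathscr{I}_j(e,i)=\varnothing\ \text{or}\ S'_{ij}\cap\bigcap_{k\in\mathscr{I}_j(e,i)}S'_{kj}\neq\varnothing\}$. $E$ denotes the set of all admissible functions. For $e\in E$ and $j\in\mathscr{J}$ let $\mathscr{I}_j(e)=\{i\in\mathscr{I}:e(i)=j\}$, and let $S(e)$ be the set of all $x=(x_1,\dots,x_n)$ such that for every $j\in\mathscr{J}$: $x_j\in\bigcap_{i\in\mathscr{I}_j(e)}S'_{ij}$ if $\mathscr{I}_j(e)\neq\varnothing$, and $x_j\in I_j$ if $\mathscr{I}_j(e)=\varnothing$. (A union over an empty index set is $\varnothing$.) *)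

theory Defs
  imports "HOL-Analysis.Analysis" "HOL-Library.FuncSet"
begin

text \<open>A t-norm on [0,1], represented as a real function of two arguments
  whose behaviour matters only on [0,1] x [0,1].\<close>
definition tnorm :: "(real \<Rightarrow> real \<Rightarrow> real) \<Rightarrow> bool" where
  "tnorm \<phi> \<longleftrightarrow>
     (\<forall>x\<in>{0..1}. \<forall>y\<in>{0..1}. \<phi> x y \<in> {0..1}) \<and>
     (\<forall>x\<in>{0..1}. \<forall>y\<in>{0..1}. \<phi> x y = \<phi> y x) \<and>
     (\<forall>x\<in>{0..1}. \<forall>y\<in>{0..1}. \<forall>z\<in>{0..1}. \<phi> x (\<phi> y z) = \<phi> (\<phi> x y) z) \<and>
     (\<forall>x\<in>{0..1}. \<forall>x'\<in>{0..1}. \<forall>y\<in>{0..1}. x \<le> x' \<longrightarrow> \<phi> x y \<le> \<phi> x' y) \<and>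
     (\<forall>x\<in>{0..1}. \<forall>y\<in>{0..1}. \<forall>y'\<in>{0..1}. y \<le> y' \<longrightarrow> \<phi> x y \<le> \<phi> x y') \<and>
     (\<forall>x\<in>{0..1}. \<phi> x 1 = x)"

definition continuous_archimedean_tnorm :: "(real \<Rightarrow> real \<Rightarrow> real) \<Rightarrow> bool" where
  "continuous_archimedean_tnorm \<phi> \<longleftrightarrow>
     tnorm \<phi> \<and>
     continuous_on ({0..1} \<times> {0..1}) (\<lambda>(x, y). \<phi> x y) \<and>
     (\<forall>x\<in>{0<..<1}. \<phi> x x < x)"

definition lhs :: "(real \<Rightarrow> real \<Rightarrow> real) \<Rightarrow> real \<Rightarrow> real \<Rightarrow> real \<Rightarrow> real" where
  "lhs \<phi> ap am t = max (\<phi> ap t) (\<phi> am (1 - t))"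

definition sol_set ::
  "(real \<Rightarrow> real \<Rightarrow> real) \<Rightarrow> (nat \<Rightarrow> nat \<Rightarrow> real) \<Rightarrow> (nat \<Rightarrow> nat \<Rightarrow> real) \<Rightarrow> (nat \<Rightarrow> real)
   \<Rightarrow> nat \<Rightarrow> nat \<Rightarrow> (nat \<Rightarrow> real) set" where
  "sol_set \<phi> Ap Am b m n =
     {x \<in> {1..n} \<rightarrow>\<^sub>E {0..1}.
        \<forall>i\<in>{1..m}. (MAX j\<in>{1..n}. lhs \<phi> (Ap i j) (Am i j) (x j)) = b i}"

definition S_ij where
  "S_ij \<phi> Ap Am b i j = {t\<in>{0..1::real}. lhs \<phi> (Ap i j) (Am i j) t = b i}"

definition I_ij where
  "I_ij \<phi> Ap Am b i j = {t\<in>{0..1::real}. lhs \<phi> (Ap i j) (Am i j) t \<le> b i}"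

definition I_j where
  "I_j \<phi> Ap Am b m j = (\<Inter>i\<in>{1..m}. I_ij \<phi> Ap Am b i j)"

definition S'_ij where
  "S'_ij \<phi> Ap Am b m i j = S_ij \<phi> Ap Am b i j \<inter> I_j \<phi> Ap Am b m j"

definition J_i where
  "J_i \<phi> Ap Am b m n i = {j\<in>{1..n}. S'_ij \<phi> Ap Am b m i j \<noteq> {}}"

definition I_j_e_i :: "(nat \<Rightarrow> nat) \<Rightarrow> nat \<Rightarrow> nat \<Rightarrow> nat set" where
  "I_j_e_i e i j = {k. 1 \<le> k \<and> k < i \<and> e k = j}"

definition J_i_e where
  "J_i_e \<phi> Ap Am b m n e i =
     (if i = 1 then J_i \<phi> Ap Am b m n 1
      else {j \<in> J_i \<phi> Ap Am b m n i.
              I_j_e_i e i j = {} \<or>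
              S'_ij \<phi> Ap Am b m i j \<inter> (\<Inter>k\<in>I_j_e_i e i j. S'_ij \<phi> Ap Am b m k j) \<noteq> {}})"

definition admissible_set where
  "admissible_set \<phi> Ap Am b m n =
     {e \<in> {1..m} \<rightarrow>\<^sub>E {1..n}. \<forall>i\<in>{1..m}. e i \<in> J_i_e \<phi> Ap Am b m n e i}"

definition I_j_e :: "nat \<Rightarrow> (nat \<Rightarrow> nat) \<Rightarrow> nat \<Rightarrow> nat set" where
  "I_j_e m e j = {i\<in>{1..m}. e i = j}"

definition S_e where
  "S_e \<phi> Ap Am b m n e =
     {x \<in> {1..n} \<rightarrow>\<^sub>E UNIV.
        \<forall>j\<in>{1..n}.
          (I_j_e m e j \<noteq> {} \<longrightarrow> x j \<in> (\<Inter>i\<in>I_j_e m e j. S'_ij \<phi> Ap Am b m i j)) \<and>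
          (I_j_e m e j = {} \<longrightarrow> x j \<in> I_j \<phi> Ap Am b m j)}"

end

theory Submission
  imports Defs
begin

theorem theorem3:
  fixes \<phi> :: "real \<Rightarrow> real \<Rightarrow> real"
    and Ap Am :: "nat \<Rightarrow> nat \<Rightarrow> real" and b :: "nat \<Rightarrow> real" and m n :: nat
  assumes "continuous_archimedean_tnorm \<phi>"
    and "m \<ge> 1" and "n \<ge> 1"
    and "\<forall>i\<in>{1..m}. \<forall>j\<in>{1..n}. Ap i j \<in> {0..1} \<and> Am i j \<in> {0..1}"
    and "\<forall>i\<in>{1..m}. b i \<in> {0..1}"
  shows "sol_set \<phi> Ap Am b m n = (\<Union>e\<in>admissible_set \<phi> Ap Am b m n. S_e \<phi> Ap Am b m n e)"
proof
  let ?L = "\<lambda>i j t. lhs \<phi> (Ap i j) (Am i j) t"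
  show "sol_set \<phi> Ap Am b m n \<subseteq> (\<Union>e\<in>admissible_set \<phi> Ap Am b m n. S_e \<phi> Ap Am b m n e)"
  proof
    fix x assume x: "x \<in> sol_set \<phi> Ap Am b m n"
    hence xe: "x \<in> {1..n} \<rightarrow>\<^sub>E {0..1}" and xm: "\<forall>i\<in>{1..m}. (MAX j\<in>{1..n}. ?L i j (x j)) = b i"
      unfolding sol_set_def by auto
    have ne: "{1..n} \<noteq> {}" using assms(3) by auto
    have le: "?L i j (x j) \<le> b i" if "i \<in> {1..m}" "j \<in> {1..n}" for i j
      using xm that Max_ge[of "(\<lambda>j. ?L i j (x j)) ` {1..n}"] by auto
    have Ij: "x j \<in> I_j \<phi> Ap Am b m j" if "j \<in> {1..n}" for j
      using le that xe unfolding I_j_def I_ij_def by auto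
    have ex: "\<exists>j\<in>{1..n}. ?L i j (x j) = b i" if "i \<in> {1..m}" for i
    proof -
      have "(MAX j\<in>{1..n}. ?L i j (x j)) \<in> (\<lambda>j. ?L i j (x j)) ` {1..n}"
        using ne by (intro Max_in) auto
      then show ?thesis using xm that by auto
    qed
    define e where "e i = (if i \<in> {1..m} then (SOME j. j\<in>{1..n} \<and> ?L i j (x j) = b i) else undefined)" for i
    have e1: "e i \<in> {1..n} \<and> ?L i (e i) (x (e i)) = b i" if "i \<in> {1..m}" for i
      using someI_ex[OF ex[OF that, unfolded Bex_def]] that unfolding e_def by auto
    have S': "x (e i) \<in> S'_ij \<phi> Ap Am b m i (e i)" if "i \<in> {1..m}" for i
      using e1[OF that] Ij[of "e i"] xe that unfolding S'_ij_def S_ij_def by auto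
    have S'2: "x j \<in> S'_ij \<phi> Ap Am b m i j" if "i \<in> {1..m}" "e i = j" for i j
      using S' that by auto
    have eE: "e \<in> {1..m} \<rightarrow>\<^sub>E {1..n}" using e1 unfolding e_def by auto
    have adm: "e \<in> admissible_set \<phi> Ap Am b m n"
      unfolding admissible_set_def
    proof (intro CollectI conjI ballI eE)
      fix i assume i: "i \<in> {1..m}"
      have J: "e i \<in> J_i \<phi> Ap Am b m n i" unfolding J_i_def using S'[OF i] e1[OF i] by auto
      have "x (e i) \<in> (\<Inter>k\<in>I_j_e_i e i (e i). S'_ij \<phi> Ap Am b m k (e i))"
        using i by (auto simp: I_j_e_i_def intro!: S'2)
      then show "e i \<in> J_i_e \<phi> Ap Am b m n e i"
        unfolding J_i_e_def using J S'[OF i] by auto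
    qed
    have "x \<in> S_e \<phi> Ap Am b m n e"
      unfolding S_e_def using xe Ij by (auto simp: I_j_e_def intro!: S'2)
    then show "x \<in> (\<Union>e\<in>admissible_set \<phi> Ap Am b m n. S_e \<phi> Ap Am b m n e)"
      using adm by auto
  qed
  show "(\<Union>e\<in>admissible_set \<phi> Ap Am b m n. S_e \<phi> Ap Am b m n e) \<subseteq> sol_set \<phi> Ap Am b m n"
  proof
    fix x assume "x \<in> (\<Union>e\<in>admissible_set \<phi> Ap Am b m n. S_e \<phi> Ap Am b m n e)"
    then obtain e where e: "e \<in> admissible_set \<phi> Ap Am b m n" and xS: "x \<in> S_e \<phi> Ap Am b m n e" by auto
    have eE: "e \<in> {1..m} \<rightarrow>\<^sub>E {1..n}" using e unfolding admissible_set_def by auto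
    have xE: "x \<in> {1..n} \<rightarrow>\<^sub>E UNIV" using xS unfolding S_e_def by auto
    have Ij: "x j \<in> I_j \<phi> Ap Am b m j" if "j \<in> {1..n}" for j
    proof (cases "I_j_e m e j = {}")
      case True then show ?thesis using xS that unfolding S_e_def by auto
    next
      case False
      then obtain i where "i \<in> I_j_e m e j" by auto
      then show ?thesis using xS that False unfolding S_e_def S'_ij_def by blast
    qed
    have m1: "1 \<in> {1..m}" using assms(2) by auto
    have x01: "x j \<in> {0..1}" if "j \<in> {1..n}" for j
      using Ij[OF that] m1 unfolding I_j_def I_ij_def by blast
    have le: "?L i j (x j) \<le> b i" if "i \<in> {1..m}" "j \<in> {1..n}" for i j
      using Ij[OF that(2)] that(1) unfolding I_j_def I_ij_def by blast
    have eq: "?L i (e i) (x (e i)) = b i" if i: "i \<in> {1..m}" for i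
    proof -
      have ei: "e i \<in> {1..n}" using eE i by auto
      have "i \<in> I_j_e m e (e i)" using i unfolding I_j_e_def by auto
      hence "x (e i) \<in> S'_ij \<phi> Ap Am b m i (e i)" using xS ei unfolding S_e_def by blast
      thus ?thesis unfolding S'_ij_def S_ij_def by auto
    qed
    have "(MAX j\<in>{1..n}. ?L i j (x j)) = b i" if i: "i \<in> {1..m}" for i
    proof (rule antisym)
      have ne: "{1..n} \<noteq> {}" using assms(3) by auto
      show "(MAX j\<in>{1..n}. ?L i j (x j)) \<le> b i" using le[OF i] ne by (subst Max_le_iff) auto
      have ei: "e i \<in> {1..n}" using eE i by auto
      show "b i \<le> (MAX j\<in>{1..n}. ?L i j (x j))"
        using eq[OF i] ei by (intro Max_ge_iff[THEN iffD2]) (auto intro!: bexI[of _ "e i"])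
    qed
    then show "x \<in> sol_set \<phi> Ap Am b m n"
      unfolding sol_set_def using xE x01 by auto
  qed
qed

end
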